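(* Let $(M,\circ,\mathrm{OR})$ be a free $\mathbb{D}$-module of rank 3 with scalar product and orientation, and let $z_1,z_2\in M\setminus\epsilon M$. Then $z_1$ and $z_2$ are proportional (i.e. $z_1=\lambda z_2$ for some $\lambda\in\mathbb{D}$) if and only if $z_1\times z_2=0$.
   Context: $\mathbb{D}=\{a+\epsilon b: a,b\in\mathbb{R}\}$, $\epsilon^2=0$. Scalar product: symmetric $\mathbb{D}$-bilinear $\circ:M\times M\to\mathbb{D}$ with $\mathfrak{Re}(x\circ x)\ge0$, equality iff $x\in\epsilon M$; orientation: one of the two classes of ordered bases under $\{b'_j=A_{jk}b_k\}\sim\{b_k\}$ iff $\det\mathfrak{Re}(A)>0$. Cross product: $x\times y=x^iy^j\epsilon_{ijk}m_k$ where $x=x^im_i$, $y=y^im_i$ in any positive orthonormal basis $\{m_i\}$ ($m_i\circ m_j=\delta_{ij}$). *)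

theory Defs
  imports Complex_Main "HOL-Library.Numeral_Type"
begin

datatype dual = Dual (dre: real) (deps: real)

instantiation dual :: comm_ring_1
begin
definition "zero_dual = Dual 0 0"
definition "one_dual = Dual 1 0"
definition "plus_dual x y = Dual (dre x + dre y) (deps x + deps y)"
definition "minus_dual x y = Dual (dre x - dre y) (deps x - deps y)"
definition "uminus_dual x = Dual (- dre x) (- deps x)"
definition "times_dual x y = Dual (dre x * dre y) (dre x * deps y + deps x * dre y)"
instance
  by standard (auto simp: zero_dual_def one_dual_def plus_dual_def minus_dual_def
      uminus_dual_def times_dual_def algebra_simps intro: dual.expand)
end

definition deps_unit :: dual ("\<epsilon>\<^sub>D") where "\<epsilon>\<^sub>D = Dual 0 1"

definition eps_part :: "(dual \<Rightarrow> 'm \<Rightarrow> 'm) \<Rightarrow> 'm set" where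
  "eps_part sc = {sc \<epsilon>\<^sub>D y | y. True}"

definition dual_basis :: "(dual \<Rightarrow> 'm::comm_monoid_add \<Rightarrow> 'm) \<Rightarrow> (3 \<Rightarrow> 'm) \<Rightarrow> bool" where
  "dual_basis sc b \<longleftrightarrow> (\<forall>x. \<exists>!c::3 \<Rightarrow> dual. x = (\<Sum>i\<in>UNIV. sc (c i) (b i)))"

definition coords :: "(dual \<Rightarrow> 'm::comm_monoid_add \<Rightarrow> 'm) \<Rightarrow> (3 \<Rightarrow> 'm) \<Rightarrow> 'm \<Rightarrow> 3 \<Rightarrow> dual" where
  "coords sc b x = (THE c. x = (\<Sum>i\<in>UNIV. sc (c i) (b i)))"

definition det3 :: "(3 \<Rightarrow> 3 \<Rightarrow> real) \<Rightarrow> real" where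
  "det3 A = A 0 0 * (A 1 1 * A 2 2 - A 1 2 * A 2 1)
          - A 0 1 * (A 1 0 * A 2 2 - A 1 2 * A 2 0)
          + A 0 2 * (A 1 0 * A 2 1 - A 1 1 * A 2 0)"

definition same_orientation :: "(dual \<Rightarrow> 'm::comm_monoid_add \<Rightarrow> 'm) \<Rightarrow> (3 \<Rightarrow> 'm) \<Rightarrow> (3 \<Rightarrow> 'm) \<Rightarrow> bool" where
  "same_orientation sc b' b \<longleftrightarrow>
     (\<exists>A::3 \<Rightarrow> 3 \<Rightarrow> dual. (\<forall>j. b' j = (\<Sum>k\<in>UNIV. sc (A j k) (b k))) \<and> det3 (\<lambda>j k. dre (A j k)) > 0)"

definition is_orientation :: "(dual \<Rightarrow> 'm::comm_monoid_add \<Rightarrow> 'm) \<Rightarrow> (3 \<Rightarrow> 'm) set \<Rightarrow> bool" where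
  "is_orientation sc OR \<longleftrightarrow>
     (\<exists>b. dual_basis sc b \<and> OR = {b'. dual_basis sc b' \<and> same_orientation sc b' b})"

definition scalar_product :: "(dual \<Rightarrow> 'm::ab_group_add \<Rightarrow> 'm) \<Rightarrow> ('m \<Rightarrow> 'm \<Rightarrow> dual) \<Rightarrow> bool" where
  "scalar_product sc sp \<longleftrightarrow>
     (\<forall>x y. sp x y = sp y x) \<and>
     (\<forall>x y z. sp (x + y) z = sp x z + sp y z) \<and>
     (\<forall>a x y. sp (sc a x) y = a * sp x y) \<and>
     (\<forall>x. dre (sp x x) \<ge> 0) \<and>
     (\<forall>x. dre (sp x x) = 0 \<longleftrightarrow> x \<in> eps_part sc)"

definition pos_orthonormal_basis ::
  "(dual \<Rightarrow> 'm::comm_monoid_add \<Rightarrow> 'm) \<Rightarrow> ('m \<Rightarrow> 'm \<Rightarrow> dual) \<Rightarrow> (3 \<Rightarrow> 'm) set \<Rightarrow> (3 \<Rightarrow> 'm) \<Rightarrow> bool" where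
  "pos_orthonormal_basis sc sp OR m \<longleftrightarrow>
     dual_basis sc m \<and> m \<in> OR \<and> (\<forall>i j. sp (m i) (m j) = (if i = j then 1 else 0))"

text \<open>Cross product x \<times> y = x^i y^j eps_ijk m_k in a positive orthonormal basis m
  (Levi-Civita sum written out).\<close>
definition cross_prod ::
  "(dual \<Rightarrow> 'm::comm_monoid_add \<Rightarrow> 'm) \<Rightarrow> ('m \<Rightarrow> 'm \<Rightarrow> dual) \<Rightarrow> (3 \<Rightarrow> 'm) set \<Rightarrow> 'm \<Rightarrow> 'm \<Rightarrow> 'm" where
  "cross_prod sc sp OR x y =
    (let m = (SOME m. pos_orthonormal_basis sc sp OR m);
         u = coords sc m x; v = coords sc m y
     in sc (u 1 * v 2 - u 2 * v 1) (m 0) + sc (u 2 * v 0 - u 0 * v 2) (m 1)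
        + sc (u 0 * v 1 - u 1 * v 0) (m 2))"

end

theory Submission
  imports Defs
begin

lemma ex3: fixes x :: 3 shows "x = 0 \<or> x = 1 \<or> x = 2"
proof (induct x)
  case (of_int z)
  then have "z = 0 \<or> z = 1 \<or> z = 2" by fastforce
  then show ?case by auto
qed

lemma UNIV3: "(UNIV::3 set) = {0,1,2}" using ex3 by auto
lemma sum3: "sum f (UNIV::3 set) = f 0 + f 1 + f 2" unfolding UNIV3 by (simp add: ac_simps)
lemma all3: "(\<forall>i::3. P i) \<longleftrightarrow> P 0 \<and> P 1 \<and> P 2" by (metis ex3)
lemma neq3[simp]: "(0::3) \<noteq> 1" "(1::3) \<noteq> 0" "(0::3) \<noteq> 2" "(2::3) \<noteq> 0" "(1::3) \<noteq> 2" "(2::3) \<noteq> 1"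
  by simp_all

lemma dual_eq: "x = y \<longleftrightarrow> dre x = dre y \<and> deps x = deps y" by (cases x; cases y) auto

lemma dual_simps[simp]: "dre 0 = 0" "deps 0 = 0" "dre 1 = 1" "deps 1 = 0"
  "dre (x+y) = dre x + dre y" "deps (x+y) = deps x + deps y"
  "dre (x-y) = dre x - dre y" "deps (x-y) = deps x - deps y"
  "dre (-x) = - dre x" "deps (-x) = - deps x"
  "dre (x*y) = dre x * dre y" "deps (x*y) = dre x * deps y + deps x * dre y"
  "dre \<epsilon>\<^sub>D = 0" "deps \<epsilon>\<^sub>D = 1"
  by (simp_all add: zero_dual_def one_dual_def plus_dual_def minus_dual_def
      uminus_dual_def times_dual_def deps_unit_def)

definition dinv :: "dual \<Rightarrow> dual" where "dinv x = Dual (1 / dre x) (- deps x / (dre x)^2)"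
definition dsqrt :: "dual \<Rightarrow> dual" where "dsqrt x = Dual (sqrt (dre x)) (deps x / (2 * sqrt (dre x)))"

lemma dinv: "dre x \<noteq> 0 \<Longrightarrow> x * dinv x = 1"
  by (simp add: dual_eq dinv_def field_simps power2_eq_square)
lemma dre_dinv[simp]: "dre (dinv x) = 1 / dre x" by (simp add: dinv_def)
lemma dsqrt: "dre x > 0 \<Longrightarrow> dsqrt x * dsqrt x = x"
  by (simp add: dual_eq dsqrt_def field_simps)
lemma dsqrt_pos: "dre x > 0 \<Longrightarrow> dre (dsqrt x) > 0"
  by (simp add: dsqrt_def)

definition lin :: "(dual \<Rightarrow> 'm::ab_group_add \<Rightarrow> 'm) \<Rightarrow> (3 \<Rightarrow> 'm) \<Rightarrow> (3 \<Rightarrow> dual) \<Rightarrow> 'm" where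
  "lin sc g c = (\<Sum>i\<in>UNIV. sc (c i) (g i))"

lemma lin3: "lin sc g c = sc (c 0) (g 0) + sc (c 1) (g 1) + sc (c 2) (g 2)"
  by (simp add: lin_def sum3)

context
  fixes sc :: "dual \<Rightarrow> 'm::ab_group_add \<Rightarrow> 'm"
  assumes M: "module sc"
begin

interpretation module sc by (rule M)

lemma lin_add: "lin sc g c + lin sc g d = lin sc g (\<lambda>i. c i + d i)"
  by (simp add: lin3 algebra_simps)
lemma lin_diff: "lin sc g c - lin sc g d = lin sc g (\<lambda>i. c i - d i)"
  by (simp add: lin3 algebra_simps)
lemma lin_scale: "sc a (lin sc g c) = lin sc g (\<lambda>i. a * c i)"
  by (simp add: lin3 algebra_simps)
lemma lin_zero: "lin sc g (\<lambda>i. 0) = 0"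
  by (simp add: lin3)
lemma lin_base: "g k = lin sc g (\<lambda>i. if i = k then 1 else 0)"
  using ex3[of k] by (auto simp: lin3)

lemma basis_ex1: "dual_basis sc b \<Longrightarrow> \<exists>!c. x = lin sc b c"
  unfolding dual_basis_def lin_def by (rule spec)
lemma basis_unique: assumes "dual_basis sc b" "lin sc b c = lin sc b d" shows "c = d"
proof -
  have "\<exists>!c'. lin sc b c = lin sc b c'" by (rule basis_ex1[OF assms(1)])
  then obtain c0 where h: "\<forall>y. lin sc b c = lin sc b y \<longrightarrow> y = c0" by (rule ex1E)
  have "c = c0" "d = c0" using h[rule_format, OF refl] h[rule_format, OF assms(2)] by simp_all
  then show ?thesis by simp
qed
lemma basis_ex: "dual_basis sc b \<Longrightarrow> \<exists>c. x = lin sc b c"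
  using basis_ex1 by (rule ex1_implies_ex)
lemma coords_lin: assumes "dual_basis sc b" shows "x = lin sc b (coords sc b x)"
proof -
  have "\<exists>!c. x = lin sc b c" by (rule basis_ex1[OF assms])
  then have "x = lin sc b (THE c. x = lin sc b c)" by (rule theI')
  then show ?thesis unfolding coords_def lin_def .
qed
lemma coords_eq: "dual_basis sc b \<Longrightarrow> lin sc b c = x \<Longrightarrow> coords sc b x = c"
  using basis_unique coords_lin by metis

lemma eps_coords: assumes "dual_basis sc b"
  shows "x \<in> eps_part sc \<longleftrightarrow> (\<forall>i. dre (coords sc b x i) = 0)"
proof
  assume "x \<in> eps_part sc"
  then obtain y where y: "x = sc \<epsilon>\<^sub>D y" by (auto simp: eps_part_def)
  obtain d where d: "y = lin sc b d" using basis_ex[OF assms] by blast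
  have "x = lin sc b (\<lambda>i. \<epsilon>\<^sub>D * d i)" using y d lin_scale by simp
  then have "coords sc b x = (\<lambda>i. \<epsilon>\<^sub>D * d i)"
    using coords_eq[OF assms] by simp
  then show "\<forall>i. dre (coords sc b x i) = 0" by simp
next
  assume h: "\<forall>i. dre (coords sc b x i) = 0"
  define c where "c = coords sc b x"
  have c: "c = (\<lambda>i. \<epsilon>\<^sub>D * Dual (deps (c i)) 0)"
    unfolding c_def
  proof (rule ext)
    fix i show "coords sc b x i = \<epsilon>\<^sub>D * Dual (deps (coords sc b x i)) 0"
      using h[rule_format, of i] by (simp add: dual_eq)
  qed
  have "x = lin sc b c" unfolding c_def by (rule coords_lin[OF assms])
  also have "\<dots> = lin sc b (\<lambda>i. \<epsilon>\<^sub>D * Dual (deps (c i)) 0)" by (rule arg_cong[where f="lin sc b", OF c])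
  also have "\<dots> = sc \<epsilon>\<^sub>D (lin sc b (\<lambda>i. Dual (deps (c i)) 0))" by (simp only: lin_scale)
  finally show "x \<in> eps_part sc" unfolding eps_part_def by blast
qed

end

context
  fixes sc :: "dual \<Rightarrow> 'm::ab_group_add \<Rightarrow> 'm" and sp :: "'m \<Rightarrow> 'm \<Rightarrow> dual"
  assumes M: "module sc" and SP: "scalar_product sc sp"
begin

interpretation module sc by (rule M)

lemma sp_sym: "sp x y = sp y x" using SP unfolding scalar_product_def by blast
lemma sp_add_l: "sp (x + y) z = sp x z + sp y z" using SP unfolding scalar_product_def by blast
lemma sp_scale_l: "sp (sc a x) y = a * sp x y" using SP unfolding scalar_product_def by blast
lemma sp_add_r: "sp z (x + y) = sp z x + sp z y" by (metis sp_sym sp_add_l)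
lemma sp_scale_r: "sp y (sc a x) = a * sp y x" by (metis sp_sym sp_scale_l)
lemma sp_diff_l: "sp (x - y) z = sp x z - sp y z"
proof -
  have "sp (x - y) z = sp (x + sc (-1) y) z" by simp
  also have "\<dots> = sp x z + (-1) * sp y z" by (simp only: sp_add_l sp_scale_l)
  finally show ?thesis by simp
qed
lemma sp_pos: "x \<notin> eps_part sc \<Longrightarrow> dre (sp x x) > 0"
  using SP unfolding scalar_product_def by (metis order_less_le)

lemma norm_props:
  assumes "w \<notin> eps_part sc"
  defines "s \<equiv> dsqrt (sp w w)"
  shows "sp (sc (dinv s) w) (sc (dinv s) w) = 1" "sc s (sc (dinv s) w) = w" "dre (dinv s) > 0"
proof -
  have p: "dre (sp w w) > 0" using sp_pos[OF assms(1)] .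
  have ss: "s * s = sp w w" unfolding s_def using dsqrt[OF p] .
  have sp0: "dre s > 0" unfolding s_def using dsqrt_pos[OF p] .
  have inv: "s * dinv s = 1" using dinv[of s] sp0 by simp
  have "sp (sc (dinv s) w) (sc (dinv s) w) = dinv s * dinv s * (s * s)"
    by (simp add: sp_scale_l sp_scale_r ss)
  also have "\<dots> = (s * dinv s) * (s * dinv s)" by (simp add: algebra_simps)
  finally show "sp (sc (dinv s) w) (sc (dinv s) w) = 1" using inv by simp
  show "sc s (sc (dinv s) w) = w" using inv by simp
  show "dre (dinv s) > 0" using sp0 by simp
qed

lemma lin_not_eps: "dual_basis sc b \<Longrightarrow> dre (c k) \<noteq> 0 \<Longrightarrow> lin sc b c \<notin> eps_part sc"
  using eps_coords[OF M] coords_eq[OF M] by metis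

lemma exists_pob:
  assumes OR: "is_orientation sc OR"
  shows "\<exists>m. pos_orthonormal_basis sc sp OR m"
proof -
  obtain b where B: "dual_basis sc b" and ORb: "OR = {b'. dual_basis sc b' \<and> same_orientation sc b' b}"
    using OR unfolding is_orientation_def by blast
  define s0 where "s0 = dsqrt (sp (b 0) (b 0))"
  define d0 where "d0 = dinv s0"
  define e0 where "e0 = sc d0 (b 0)"
  define a0 where "a0 = (\<lambda>i::3. d0 * (if i = 0 then 1 else 0))"
  have e0a: "e0 = lin sc b a0" unfolding e0_def a0_def
    by (subst lin_base[OF M, of b 0]) (simp only: lin_scale[OF M])
  have b0: "b 0 \<notin> eps_part sc"
    using lin_not_eps[OF B, of "\<lambda>i. if i = 0 then 1 else 0" 0] lin_base[OF M, of b 0] by simp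
  note N0 = norm_props[OF b0, folded s0_def, folded d0_def, folded e0_def]
  define p10 where "p10 = sp (b 1) e0"
  define w1 where "w1 = b 1 - sc p10 e0"
  define c1 where "c1 = (\<lambda>i::3. (if i = 1 then 1 else 0) - p10 * a0 i)"
  have w1c: "w1 = lin sc b c1" unfolding w1_def c1_def e0a
    by (subst lin_base[OF M, of b 1]) (simp only: lin_scale[OF M] lin_diff[OF M])
  have w1n: "w1 \<notin> eps_part sc"
    unfolding w1c by (rule lin_not_eps[OF B, of _ 1]) (simp add: c1_def a0_def)
  define s1 where "s1 = dsqrt (sp w1 w1)"
  define d1 where "d1 = dinv s1"
  define e1 where "e1 = sc d1 w1"
  define a1 where "a1 = (\<lambda>i::3. d1 * c1 i)"
  have e1a: "e1 = lin sc b a1" unfolding e1_def a1_def w1c by (simp only: lin_scale[OF M])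
  note N1 = norm_props[OF w1n, folded s1_def, folded d1_def, folded e1_def]
  define p20 where "p20 = sp (b 2) e0"
  define p21 where "p21 = sp (b 2) e1"
  define w2 where "w2 = b 2 - sc p20 e0 - sc p21 e1"
  define c2 where "c2 = (\<lambda>i::3. (if i = 2 then 1 else 0) - p20 * a0 i - p21 * a1 i)"
  have w2c: "w2 = lin sc b c2" unfolding w2_def c2_def e0a e1a
    by (subst lin_base[OF M, of b 2]) (simp only: lin_scale[OF M] lin_diff[OF M])
  have w2n: "w2 \<notin> eps_part sc"
    unfolding w2c by (rule lin_not_eps[OF B, of _ 2]) (simp add: c2_def a0_def a1_def c1_def)
  define s2 where "s2 = dsqrt (sp w2 w2)"
  define d2 where "d2 = dinv s2"
  define e2 where "e2 = sc d2 w2"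
  define a2 where "a2 = (\<lambda>i::3. d2 * c2 i)"
  have e2a: "e2 = lin sc b a2" unfolding e2_def a2_def w2c by (simp only: lin_scale[OF M])
  note N2 = norm_props[OF w2n, folded s2_def, folded d2_def, folded e2_def]
  have o10: "sp e1 e0 = 0"
    unfolding e1_def w1_def by (simp add: sp_scale_l sp_diff_l N0 p10_def)
  have o20: "sp e2 e0 = 0"
    unfolding e2_def w2_def by (simp add: sp_scale_l sp_diff_l N0 o10 p20_def)
  have o21: "sp e2 e1 = 0"
    unfolding e2_def w2_def by (simp add: sp_scale_l sp_diff_l N1 o10 sp_sym[of e0 e1] p21_def)
  define E where "E = (\<lambda>i::3. if i = 0 then e0 else if i = 1 then e1 else e2)"
  have E[simp]: "E 0 = e0" "E 1 = e1" "E 2 = e2" by (simp_all add: E_def)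
  have orth: "sp (E i) (E j) = (if i = j then 1 else 0)" for i j
    using ex3[of i] ex3[of j] N0(1) N1(1) N2(1) o10 o20 o21 sp_sym[of e0 e1] sp_sym[of e0 e2]
      sp_sym[of e1 e2] by auto
  have spE: "sp (lin sc E c) (E j) = c j" for c j
    using ex3[of j] N0(1) N1(1) N2(1) o10 o20 o21 sp_sym[of e0 e1] sp_sym[of e0 e2]
      sp_sym[of e1 e2] by (auto simp: lin3 sp_add_l sp_scale_l)
  have bE0: "b 0 = sc s0 e0" using N0(2) by simp
  have bE1: "b 1 = sc s1 e1 + sc p10 e0" using N1(2) unfolding w1_def by simp
  have bE2: "b 2 = sc s2 e2 + sc p20 e0 + sc p21 e1" using N2(2) unfolding w2_def by simp
  have DB: "dual_basis sc E"
    unfolding dual_basis_def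
  proof
    fix x
    obtain c where c: "x = lin sc b c" using basis_ex[OF M B] by blast
    define v where "v = (\<lambda>i::3. if i = 0 then c 0 * s0 + c 1 * p10 + c 2 * p20
       else if i = 1 then c 1 * s1 + c 2 * p21 else c 2 * s2)"
    have "x = lin sc E v"
      unfolding c lin3 bE0 bE1 bE2 by (simp add: v_def algebra_simps)
    moreover have "u = v" if "x = lin sc E u" for u
    proof
      fix j show "u j = v j" using spE[of u j] spE[of v j] \<open>x = lin sc E v\<close> that by simp
    qed
    ultimately show "\<exists>!c. x = (\<Sum>i\<in>UNIV. sc (c i) (E i))" unfolding lin_def by blast
  qed
  define A where "A = (\<lambda>j::3. if j = 0 then a0 else if j = 1 then a1 else a2)"
  have "same_orientation sc E b"
    unfolding same_orientation_def
  proof (intro exI conjI allI)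
    fix j :: 3
    show "E j = (\<Sum>k\<in>UNIV. sc (A j k) (b k))"
      using ex3[of j] e0a e1a e2a unfolding lin_def A_def by auto
  next
    have "det3 (\<lambda>j k. dre (A j k)) = dre d0 * dre d1 * dre d2"
      by (simp add: det3_def A_def a0_def a1_def a2_def c1_def c2_def)
    then show "0 < det3 (\<lambda>j k. dre (A j k))" using N0(3) N1(3) N2(3) by simp
  qed
  then have "pos_orthonormal_basis sc sp OR E"
    unfolding pos_orthonormal_basis_def ORb using DB orth by simp
  then show ?thesis by blast
qed

end

theorem proposition13:
  fixes sc :: "dual \<Rightarrow> 'm::ab_group_add \<Rightarrow> 'm"
    and sp :: "'m \<Rightarrow> 'm \<Rightarrow> dual"
    and OR :: "(3 \<Rightarrow> 'm) set"
    and z1 z2 :: 'm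
  assumes "module sc"
    and "\<exists>b. dual_basis sc b"
    and "scalar_product sc sp"
    and "is_orientation sc OR"
    and "z1 \<notin> eps_part sc"
    and "z2 \<notin> eps_part sc"
  shows "(\<exists>l. z1 = sc l z2) \<longleftrightarrow> cross_prod sc sp OR z1 z2 = 0"
proof -
  note M = assms(1)
  interpret module sc by (rule M)
  define m where "m = (SOME m. pos_orthonormal_basis sc sp OR m)"
  have "pos_orthonormal_basis sc sp OR m"
    unfolding m_def using exists_pob[OF M assms(3) assms(4)] by (rule someI_ex)
  then have MB: "dual_basis sc m" unfolding pos_orthonormal_basis_def by blast
  define u where "u = coords sc m z1"
  define v where "v = coords sc m z2"
  have z1: "z1 = lin sc m u" unfolding u_def by (rule coords_lin[OF M MB])
  have z2: "z2 = lin sc m v" unfolding v_def by (rule coords_lin[OF M MB])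
  define w where "w = (\<lambda>k::3. if k = 0 then u 1 * v 2 - u 2 * v 1 else if k = 1 then u 2 * v 0 - u 0 * v 2
       else u 0 * v 1 - u 1 * v 0)"
  have cp: "cross_prod sc sp OR z1 z2 = lin sc m w"
    unfolding cross_prod_def Let_def m_def[symmetric] u_def[symmetric] v_def[symmetric] lin3 w_def
    by simp
  show ?thesis
  proof
    assume "\<exists>l. z1 = sc l z2"
    then obtain l where l: "z1 = sc l z2" by blast
    have "lin sc m (\<lambda>i. l * v i) = z1" using l z2 lin_scale[OF M] by simp
    then have "u = (\<lambda>i. l * v i)" unfolding u_def by (rule coords_eq[OF M MB])
    then have "w = (\<lambda>k. 0)" by (auto simp: w_def algebra_simps)
    then show "cross_prod sc sp OR z1 z2 = 0" using cp lin_zero[OF M] by simp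
  next
    assume "cross_prod sc sp OR z1 z2 = 0"
    then have "lin sc m w = lin sc m (\<lambda>k. 0)" using cp lin_zero[OF M] by simp
    then have "w = (\<lambda>k. 0)" by (rule basis_unique[OF M MB])
    then have w0: "u 1 * v 2 = u 2 * v 1" "u 2 * v 0 = u 0 * v 2" "u 0 * v 1 = u 1 * v 0"
      unfolding w_def by (metis (no_types, lifting) eq_iff_diff_eq_0 neq3)+
    have sym: "u i * v k = u k * v i" for i k
      using ex3[of i] ex3[of k] w0 by (auto simp: algebra_simps)
    obtain k where k: "dre (v k) \<noteq> 0"
      using assms(6) eps_coords[OF M MB, of z2] unfolding v_def by blast
    define l where "l = u k * dinv (v k)"
    have "u = (\<lambda>i. l * v i)"
    proof
      fix i
      have "u i = u i * (v k * dinv (v k))" using dinv[OF k] by simp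
      also have "\<dots> = (u i * v k) * dinv (v k)" by (simp add: algebra_simps)
      also have "\<dots> = l * v i" unfolding l_def sym[of i k] by (simp add: algebra_simps)
      finally show "u i = l * v i" .
    qed
    then have "z1 = sc l z2" using z1 z2 lin_scale[OF M] by simp
    then show "\<exists>l. z1 = sc l z2" by blast
  qed
qed

end
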